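(* Let $G=(V,E)$ be a finite connected block graph with at least two vertices that has no false twins (no pair of distinct vertices $u,v$ with $N(u)=N(v)$), and suppose $G$ is isomorphic neither to the path $P_2$ on two vertices nor to the path $P_4$ on four vertices. Then $\gamma^{OLD}(G)\leq |V(G)|-1$.
   Context: A block graph is a graph in which every maximal 2-connected subgraph (block) is a clique. For a vertex $u$, $N(u)$ denotes its open neighborhood. A set $C\subseteq V(G)$ is an open locating-dominating code (OLD-code) if $N(u)\cap C\neq\emptyset$ for every vertex $u$ and $N(u)\cap C\neq N(v)\cap C$ for all distinct vertices $u,v$. A graph admits an OLD-code iff it has no isolated vertices and no false twins. $\gamma^{OLD}(G)$ is the minimum cardinality of an OLD-code of $G$. *)

theory Defs
  imports Main
begin

definition simple_graph :: "'a set \<Rightarrow> ('a \<Rightarrow> 'a \<Rightarrow> bool) \<Rightarrow> bool" where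
  "simple_graph V E \<longleftrightarrow> finite V \<and> (\<forall>u v. E u v \<longrightarrow> u \<in> V \<and> v \<in> V)
     \<and> (\<forall>u v. E u v \<longrightarrow> E v u) \<and> (\<forall>u. \<not> E u u)"

definition nbhd :: "'a set \<Rightarrow> ('a \<Rightarrow> 'a \<Rightarrow> bool) \<Rightarrow> 'a \<Rightarrow> 'a set" where
  "nbhd V E u = {v \<in> V. E u v}"

text \<open>The induced subgraph on S is connected (vacuously true for S empty).\<close>
definition connected_on :: "('a \<Rightarrow> 'a \<Rightarrow> bool) \<Rightarrow> 'a set \<Rightarrow> bool" where
  "connected_on E S \<longleftrightarrow>
     (\<forall>x\<in>S. \<forall>y\<in>S. (\<lambda>a b. a \<in> S \<and> b \<in> S \<and> E a b)\<^sup>*\<^sup>* x y)"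

definition connected_graph :: "'a set \<Rightarrow> ('a \<Rightarrow> 'a \<Rightarrow> bool) \<Rightarrow> bool" where
  "connected_graph V E \<longleftrightarrow> V \<noteq> {} \<and> connected_on E V"

definition nonsep_on :: "'a set \<Rightarrow> ('a \<Rightarrow> 'a \<Rightarrow> bool) \<Rightarrow> 'a set \<Rightarrow> bool" where
  "nonsep_on V E B \<longleftrightarrow> B \<noteq> {} \<and> B \<subseteq> V \<and> connected_on E B
     \<and> (\<forall>v\<in>B. connected_on E (B - {v}))"

text \<open>Blocks: maximal connected subgraphs without a cut vertex
  (maximal 2-connected subgraphs, or bridges / isolated vertices).\<close>
definition is_block :: "'a set \<Rightarrow> ('a \<Rightarrow> 'a \<Rightarrow> bool) \<Rightarrow> 'a set \<Rightarrow> bool" where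
  "is_block V E B \<longleftrightarrow> nonsep_on V E B \<and> (\<forall>B'. nonsep_on V E B' \<and> B \<subseteq> B' \<longrightarrow> B' = B)"

definition is_clique :: "('a \<Rightarrow> 'a \<Rightarrow> bool) \<Rightarrow> 'a set \<Rightarrow> bool" where
  "is_clique E B \<longleftrightarrow> (\<forall>u\<in>B. \<forall>v\<in>B. u \<noteq> v \<longrightarrow> E u v)"

definition block_graph :: "'a set \<Rightarrow> ('a \<Rightarrow> 'a \<Rightarrow> bool) \<Rightarrow> bool" where
  "block_graph V E \<longleftrightarrow> (\<forall>B. is_block V E B \<longrightarrow> is_clique E B)"

definition no_false_twins :: "'a set \<Rightarrow> ('a \<Rightarrow> 'a \<Rightarrow> bool) \<Rightarrow> bool" where
  "no_false_twins V E \<longleftrightarrow> (\<forall>u\<in>V. \<forall>v\<in>V. u \<noteq> v \<longrightarrow> nbhd V E u \<noteq> nbhd V E v)"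

definition iso_path :: "'a set \<Rightarrow> ('a \<Rightarrow> 'a \<Rightarrow> bool) \<Rightarrow> nat \<Rightarrow> bool" where
  "iso_path V E n \<longleftrightarrow> (\<exists>f. bij_betw f V {0..<n} \<and>
     (\<forall>u\<in>V. \<forall>v\<in>V. E u v \<longleftrightarrow> (f u + 1 = f v \<or> f v + 1 = f u)))"

definition is_OLD_code :: "'a set \<Rightarrow> ('a \<Rightarrow> 'a \<Rightarrow> bool) \<Rightarrow> 'a set \<Rightarrow> bool" where
  "is_OLD_code V E C \<longleftrightarrow> C \<subseteq> V
     \<and> (\<forall>u\<in>V. nbhd V E u \<inter> C \<noteq> {})
     \<and> (\<forall>u\<in>V. \<forall>v\<in>V. u \<noteq> v \<longrightarrow> nbhd V E u \<inter> C \<noteq> nbhd V E v \<inter> C)"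

definition gamma_OLD :: "'a set \<Rightarrow> ('a \<Rightarrow> 'a \<Rightarrow> bool) \<Rightarrow> nat" where
  "gamma_OLD V E = Min {card C | C. is_OLD_code V E C}"

end

theory Submission
  imports Defs
begin

lemma nb_iff: "simple_graph V E \<Longrightarrow> y \<in> nbhd V E x \<longleftrightarrow> E x y"
  by (auto simp: nbhd_def simple_graph_def)

lemma conn_center:
  assumes sym: "\<forall>a b. E a b \<longrightarrow> E b a" and c: "c \<in> S"
    and h: "\<forall>a\<in>S. a = c \<or> E c a \<or> (\<exists>b\<in>S. E c b \<and> E b a)"
  shows "connected_on E S"
proof -
  let ?R = "\<lambda>a b. a \<in> S \<and> b \<in> S \<and> E a b"
  have fwd: "?R\<^sup>*\<^sup>* c a" if "a \<in> S" for a
  proof -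
    from h that consider "a = c" | "E c a" | b where "b \<in> S" "E c b" "E b a" by blast
    then show ?thesis
    proof cases
      case 3
      then have "?R c b" "?R b a" using c that by auto
      then show ?thesis by (rule rtranclp.rtrancl_into_rtrancl[OF r_into_rtranclp])
    qed (use c that in auto)
  qed
  have bwd: "?R\<^sup>*\<^sup>* a c" if "a \<in> S" for a
  proof -
    from h that consider "a = c" | "E c a" | b where "b \<in> S" "E c b" "E b a" by blast
    then show ?thesis
    proof cases
      case 2
      then have "?R a c" using c that sym by auto
      then show ?thesis by auto
    next
      case 3
      then have "?R a b" "?R b c" using c that sym by auto
      then show ?thesis by (rule rtranclp.rtrancl_into_rtrancl[OF r_into_rtranclp])
    qed auto
  qed
  show ?thesis unfolding connected_on_def
    using fwd bwd by (meson rtranclp_trans)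
qed

lemma no_C4:
  assumes g: "simple_graph V E" and bg: "block_graph V E"
    and V: "u \<in> V" "w \<in> V" "x \<in> V" "y \<in> V"
    and d: "x \<noteq> y" "\<not> E u w" "u \<noteq> w"
    and e: "E u x" "E w x" "E u y" "E w y"
  shows False
proof -
  have sym: "\<forall>a b. E a b \<longrightarrow> E b a" and irr: "\<forall>a. \<not> E a a" and fin: "finite V"
    using g by (auto simp: simple_graph_def)
  have d2: "u \<noteq> x" "u \<noteq> y" "w \<noteq> x" "w \<noteq> y" using e irr by metis+
  let ?S = "{u,x,w,y}"
  have ns: "nonsep_on V E ?S"
    unfolding nonsep_on_def
  proof (intro conjI ballI)
    show "?S \<noteq> {}" by simp
    show "?S \<subseteq> V" using V by simp
    show "connected_on E ?S"
      by (rule conn_center[OF sym, of u]) (use e sym in auto)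
    fix v assume "v \<in> ?S"
    then consider "v = u" | "v = x" | "v = w" | "v = y" by blast
    then show "connected_on E (?S - {v})"
    proof cases
      case 1
      then have "?S - {v} = {x,w,y}" using d d2 by auto
      then show ?thesis by (metis conn_center[OF sym, of w] e sym insertCI insertE empty_iff)
    next
      case 2
      then have "?S - {v} = {u,w,y}" using d d2 by auto
      then show ?thesis by (metis conn_center[OF sym, of y] e sym insertCI insertE empty_iff)
    next
      case 3
      then have "?S - {v} = {u,x,y}" using d d2 by auto
      then show ?thesis by (metis conn_center[OF sym, of u] e sym insertCI insertE empty_iff)
    next
      case 4
      then have "?S - {v} = {u,x,w}" using d d2 by auto
      then show ?thesis by (metis conn_center[OF sym, of x] e sym insertCI insertE empty_iff)
    qed
  qed
  let ?P = "\<lambda>B. nonsep_on V E B \<and> ?S \<subseteq> B"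
  have bound: "\<forall>B. ?P B \<longrightarrow> card B < Suc (card V)"
    using fin by (auto simp: nonsep_on_def intro: card_mono le_imp_less_Suc)
  obtain B where PB: "?P B" and mx: "\<forall>B'. ?P B' \<longrightarrow> card B' \<le> card B"
    using ex_has_greatest_nat[of ?P ?S card, OF _ bound] ns by blast
  have "is_block V E B"
    unfolding is_block_def
  proof (intro conjI allI impI)
    show "nonsep_on V E B" using PB by simp
    fix B' assume "nonsep_on V E B' \<and> B \<subseteq> B'"
    then have "?P B'" "B \<subseteq> B'" "finite B'" using PB fin
      by (auto simp: nonsep_on_def intro: finite_subset)
    then show "B' = B" using mx card_seteq by metis
  qed
  then have "is_clique E B" using bg by (simp add: block_graph_def)
  then have "E u w" using PB d unfolding is_clique_def by auto
  then show False using d by simp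
qed

lemma step_ex: "r\<^sup>*\<^sup>* a b \<Longrightarrow> a \<noteq> b \<Longrightarrow> (\<And>c. r a c \<Longrightarrow> thesis) \<Longrightarrow> thesis"
  by (induction rule: converse_rtranclp_induct) auto

lemma nbhd_nonempty:
  assumes g: "simple_graph V E" and c: "connected_graph V E" and card: "card V \<ge> 2" and u: "u \<in> V"
  shows "nbhd V E u \<noteq> {}"
proof -
  have fin: "finite V" using g by (simp add: simple_graph_def)
  obtain z where z: "z \<in> V" "z \<noteq> u"
  proof -
    have "\<not> V \<subseteq> {u}"
    proof
      assume "V \<subseteq> {u}"
      then have "card V \<le> card {u}" by (intro card_mono) auto
      then show False using card by simp
    qed
    then show ?thesis using that by blast
  qed
  let ?R = "\<lambda>a b. a \<in> V \<and> b \<in> V \<and> E a b"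
  have "?R\<^sup>*\<^sup>* u z" using c u z by (simp add: connected_graph_def connected_on_def)
  moreover have "u \<noteq> z" using z(2) by simp
  ultimately obtain t where "?R u t" by (rule step_ex)
  then show ?thesis by (auto simp: nbhd_def)
qed

lemma closure_all:
  assumes c: "connected_graph V E" and S: "S \<subseteq> V" "a \<in> S"
    and cl: "\<forall>z\<in>S. \<forall>t. E z t \<longrightarrow> t \<in> S"
  shows "V = S"
proof
  show "V \<subseteq> S"
  proof
    fix z assume z: "z \<in> V"
    let ?R = "\<lambda>a b. a \<in> V \<and> b \<in> V \<and> E a b"
    have "?R\<^sup>*\<^sup>* a z" using c S z by (auto simp: connected_graph_def connected_on_def)
    then show "z \<in> S"
    proof (induction rule: rtranclp_induct)
      case base
      then show ?case using S by blast
    next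
      case (step y z)
      then show ?case using cl by blast
    qed
  qed
qed (use S in auto)

lemma bad_char:
  assumes g: "simple_graph V E" and nt: "no_false_twins V E"
    and ne: "\<forall>u\<in>V. nbhd V E u \<noteq> {}" and v: "v \<in> V"
    and bad: "\<not> is_OLD_code V E (V - {v})"
  shows "(\<exists>u\<in>V. nbhd V E u = {v}) \<or>
    (\<exists>u\<in>V. \<exists>w\<in>V. u \<noteq> w \<and> \<not> E u w \<and> E u v \<and> \<not> E w v \<and> nbhd V E u = insert v (nbhd V E w))"
proof -
  have sub: "nbhd V E z \<subseteq> V" for z by (auto simp: nbhd_def)
  have irr: "\<not> E a a" for a using g by (simp add: simple_graph_def)
  from bad consider (a) u where "u \<in> V" "nbhd V E u \<inter> (V - {v}) = {}"
    | (b) u w where "u \<in> V" "w \<in> V" "u \<noteq> w" "nbhd V E u \<inter> (V - {v}) = nbhd V E w \<inter> (V - {v})"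
    unfolding is_OLD_code_def by blast
  then show ?thesis
  proof cases
    case a
    then have "nbhd V E u = {v}" using ne sub[of u] by blast
    then show ?thesis using a by blast
  next
    case b
    have diff: "nbhd V E u \<noteq> nbhd V E w" using nt b unfolding no_false_twins_def by blast
    have key: "\<exists>u\<in>V. \<exists>w\<in>V. u \<noteq> w \<and> \<not> E u w \<and> E u v \<and> \<not> E w v \<and> nbhd V E u = insert v (nbhd V E w)"
      if "u \<in> V" "w \<in> V" "u \<noteq> w" "nbhd V E u \<inter> (V - {v}) = nbhd V E w \<inter> (V - {v})"
         "v \<in> nbhd V E u" "v \<notin> nbhd V E w" for u w
    proof -
      have eq: "nbhd V E u = insert v (nbhd V E w)" using that sub[of u] sub[of w] by blast
      have "\<not> E u w"
      proof
        assume "E u w"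
        then have "u \<in> nbhd V E w" using that g by (simp add: nb_iff simple_graph_def)
        then have "u \<in> nbhd V E u" using eq by blast
        then show False using irr g by (simp add: nb_iff)
      qed
      moreover have "E u v" "\<not> E w v" using that g nb_iff by metis+
      ultimately show ?thesis using that eq by blast
    qed
    have "(v \<in> nbhd V E u \<and> v \<notin> nbhd V E w) \<or> (v \<in> nbhd V E w \<and> v \<notin> nbhd V E u)"
    proof (rule ccontr)
      assume "\<not> ?thesis"
      then have "v \<in> nbhd V E u \<longleftrightarrow> v \<in> nbhd V E w" by blast
      then have "nbhd V E u = nbhd V E w" using b(4) sub[of u] sub[of w] by blast
      then show False using diff by contradiction
    qed
    then show ?thesis
    proof
      assume "v \<in> nbhd V E u \<and> v \<notin> nbhd V E w"
      then have "\<exists>u\<in>V. \<exists>w\<in>V. u \<noteq> w \<and> \<not> E u w \<and> E u v \<and> \<not> E w v \<and> nbhd V E u = insert v (nbhd V E w)"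
        using key[of u w] b by blast
      then show ?thesis by (rule disjI2)
    next
      assume "v \<in> nbhd V E w \<and> v \<notin> nbhd V E u"
      then have "\<exists>u\<in>V. \<exists>w\<in>V. u \<noteq> w \<and> \<not> E u w \<and> E u v \<and> \<not> E w v \<and> nbhd V E u = insert v (nbhd V E w)"
        using key[of w u] b by (metis)
      then show ?thesis by (rule disjI2)
    qed
  qed
qed

lemma bad_leaf:
  assumes g: "simple_graph V E" and bg: "block_graph V E" and nt: "no_false_twins V E"
    and ne: "\<forall>u\<in>V. nbhd V E u \<noteq> {}" and v: "v \<in> V" and leaf: "nbhd V E v = {s}"
    and bad: "\<not> is_OLD_code V E (V - {v})"
  shows "nbhd V E s = {v} \<or> (\<exists>x w. w \<in> V \<and> x \<noteq> v \<and> w \<noteq> s \<and> nbhd V E s = {v,x} \<and> nbhd V E w = {x})"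
proof -
  have sym: "\<And>a b. E a b \<Longrightarrow> E b a" and inV: "\<And>a b. E a b \<Longrightarrow> a \<in> V \<and> b \<in> V"
    using g by (auto simp: simple_graph_def)
  have nbE: "\<And>a b. b \<in> nbhd V E a \<longleftrightarrow> E a b" using g nb_iff by metis
  have toS: "u = s" if "E u v" for u
  proof -
    have "u \<in> nbhd V E v" using that sym nbE by blast
    then show ?thesis using leaf by blast
  qed
  from bad_char[OF g nt ne v bad] show ?thesis
  proof
    assume "\<exists>u\<in>V. nbhd V E u = {v}"
    then obtain u where u: "u \<in> V" "nbhd V E u = {v}" by blast
    then have "E u v" using nbE by blast
    then show ?thesis using toS u by blast
  next
    assume "\<exists>u\<in>V. \<exists>w\<in>V. u \<noteq> w \<and> \<not> E u w \<and> E u v \<and> \<not> E w v \<and> nbhd V E u = insert v (nbhd V E w)"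
    then obtain u w where uw: "u \<in> V" "w \<in> V" "u \<noteq> w" "\<not> E u w" "E u v" "\<not> E w v"
      "nbhd V E u = insert v (nbhd V E w)" by blast
    have us: "u = s" using toS uw by blast
    obtain x where x: "x \<in> nbhd V E w" using ne uw by blast
    have one: "nbhd V E w = {x}"
    proof (rule ccontr)
      assume "nbhd V E w \<noteq> {x}"
      then obtain y where y: "y \<in> nbhd V E w" "y \<noteq> x" using x by blast
      have "E w x" "E w y" "E u x" "E u y" using x y uw nbE by blast+
      then show False using no_C4[OF g bg, of u w x y] uw y inV sym by blast
    qed
    have "x \<noteq> v" using x uw nbE by blast
    then show ?thesis using one uw us by blast
  qed
qed

theorem theorem2p2:
  fixes V :: "'a set" and E :: "'a \<Rightarrow> 'a \<Rightarrow> bool"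
  assumes "simple_graph V E"
    and "connected_graph V E"
    and "block_graph V E"
    and "card V \<ge> 2"
    and "no_false_twins V E"
    and "\<not> iso_path V E 2"
    and "\<not> iso_path V E 4"
  shows "gamma_OLD V E \<le> card V - 1"
proof -
  note g = assms(1) and c = assms(2) and bg = assms(3) and nt = assms(5)
  have sym: "\<And>a b. E a b \<Longrightarrow> E b a" and inV: "\<And>a b. E a b \<Longrightarrow> a \<in> V \<and> b \<in> V"
    and irr: "\<And>a. \<not> E a a" and fin: "finite V"
    using g by (auto simp: simple_graph_def)
  have nbE: "\<And>a b. b \<in> nbhd V E a \<longleftrightarrow> E a b" using g nb_iff by metis
  have Ech: "\<And>a t S. nbhd V E a = S \<Longrightarrow> E a t \<longleftrightarrow> t \<in> S"
  proof -
    fix a t S assume "nbhd V E a = S"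
    then show "E a t \<longleftrightarrow> t \<in> S" using nbE[of t a] by simp
  qed
  have ne: "\<forall>u\<in>V. nbhd V E u \<noteq> {}" using nbhd_nonempty[OF g c assms(4)] by blast
  have Vne: "V \<noteq> {}" using c by (simp add: connected_graph_def)
  have ex: "\<exists>v\<in>V. is_OLD_code V E (V - {v})"
  proof (rule ccontr)
    assume "\<not> ?thesis"
    then have bad: "\<And>v. v \<in> V \<Longrightarrow> \<not> is_OLD_code V E (V - {v})" by blast
    show False
    proof (cases "\<exists>v\<in>V. \<exists>s. nbhd V E v = {s}")
      case True
      then obtain v s where v: "v \<in> V" and Nv: "nbhd V E v = {s}" by blast
      have Evs: "E v s" using Nv nbE by blast
      have s: "s \<in> V" using inV Evs by blast
      from bad_leaf[OF g bg nt ne v Nv bad[OF v]] show False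
      proof
        assume Ns: "nbhd V E s = {v}"
        have VV: "V = {v,s}"
          by (rule closure_all[OF c, of _ v]) (use v s Ech[OF Nv] Ech[OF Ns] in auto)
        have vs: "v \<noteq> s" using Evs irr by blast
        let ?f = "\<lambda>z. if z = v then 0 else 1::nat"
        have "iso_path V E 2"
          unfolding iso_path_def
        proof (intro exI conjI)
          show "bij_betw ?f V {0..<2}" unfolding VV bij_betw_def inj_on_def using vs by auto
          show "\<forall>a\<in>V. \<forall>b\<in>V. E a b = (?f a + 1 = ?f b \<or> ?f b + 1 = ?f a)"
            unfolding VV using vs Ech[OF Nv] Ech[OF Ns] by auto
        qed
        then show False using assms(6) by blast
      next
        assume "\<exists>x w. w \<in> V \<and> x \<noteq> v \<and> w \<noteq> s \<and> nbhd V E s = {v,x} \<and> nbhd V E w = {x}"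
        then obtain x w where w: "w \<in> V" "x \<noteq> v" "w \<noteq> s" and Ns: "nbhd V E s = {v,x}"
          and Nw: "nbhd V E w = {x}" by blast
        have Esx: "E s x" using Ns nbE by blast
        have x: "x \<in> V" using inV Esx by blast
        have sNx: "s \<in> nbhd V E x" using Esx sym nbE by blast
        from bad_leaf[OF g bg nt ne w(1) Nw bad[OF w(1)]] show False
        proof
          assume "nbhd V E x = {w}"
          then show False using sNx w(3) by auto
        next
          assume "\<exists>x' w'. w' \<in> V \<and> x' \<noteq> w \<and> w' \<noteq> x \<and> nbhd V E x = {w,x'} \<and> nbhd V E w' = {x'}"
          then obtain x' where Nx': "nbhd V E x = {w,x'}" by blast
          have "s = x'" using Nx' sNx w(3) by simp
          then have Nx: "nbhd V E x = {w,s}" using Nx' by simp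
          have d: "v \<noteq> s" "v \<noteq> x" "v \<noteq> w" "s \<noteq> x" "s \<noteq> w" "x \<noteq> w"
          proof -
            show "v \<noteq> s" using Evs irr by metis
            show "v \<noteq> x" using w(2) by metis
            show "s \<noteq> x" using Esx irr by metis
            show "s \<noteq> w" using w(3) by metis
            have "E w x" using Nw nbE by blast
            then show "x \<noteq> w" using irr by metis
            show "v \<noteq> w"
            proof
              assume "v = w"
              then have "s = x" using Nv Nw by simp
              then show False using Esx irr by metis
            qed
          qed
          have VV: "V = {v,s,x,w}"
            by (rule closure_all[OF c, of _ v])
              (use v s x w Ech[OF Nv] Ech[OF Ns] Ech[OF Nx] Ech[OF Nw] in auto)
          let ?f = "\<lambda>z. if z = v then 0 else if z = s then 1 else if z = x then 2 else 3::nat"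
          have "iso_path V E 4"
            unfolding iso_path_def
          proof (intro exI conjI)
            have "?f ` {v,s,x,w} = {0..<4}" using d by auto
            moreover have "inj_on ?f {v,s,x,w}" unfolding inj_on_def using d by auto
            ultimately show "bij_betw ?f V {0..<4}" unfolding VV bij_betw_def by blast
            show "\<forall>a\<in>V. \<forall>b\<in>V. E a b = (?f a + 1 = ?f b \<or> ?f b + 1 = ?f a)"
              unfolding VV using d Ech[OF Nv] Ech[OF Ns] Ech[OF Nx] Ech[OF Nw] by auto
          qed
          then show False using assms(7) by blast
        qed
      qed
    next
      case False
      then have nl: "\<And>v s. v \<in> V \<Longrightarrow> nbhd V E v \<noteq> {s}" by blast
      obtain v where v: "v \<in> V" using Vne by blast
      from bad_char[OF g nt ne v bad[OF v]] show False
      proof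
        assume "\<exists>u\<in>V. nbhd V E u = {v}"
        then show False using nl by blast
      next
        assume "\<exists>u\<in>V. \<exists>w\<in>V. u \<noteq> w \<and> \<not> E u w \<and> E u v \<and> \<not> E w v \<and> nbhd V E u = insert v (nbhd V E w)"
        then obtain u w where uw: "u \<in> V" "w \<in> V" "u \<noteq> w" "\<not> E u w"
          "nbhd V E u = insert v (nbhd V E w)" by blast
        obtain x where x: "x \<in> nbhd V E w" using ne uw by blast
        obtain y where y: "y \<in> nbhd V E w" "y \<noteq> x" using nl[OF uw(2), of x] x by blast
        have "E w x" "E w y" "E u x" "E u y" using x y uw nbE by blast+
        then show False using no_C4[OF g bg, of u w x y] uw y inV by blast
      qed
    qed
  qed
  then obtain v where v: "v \<in> V" "is_OLD_code V E (V - {v})" by blast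
  have finS: "finite {card C | C. is_OLD_code V E C}"
  proof (rule finite_subset)
    show "{card C | C. is_OLD_code V E C} \<subseteq> card ` Pow V" by (auto simp: is_OLD_code_def)
  qed (use fin in simp)
  have "gamma_OLD V E \<le> card (V - {v})"
    unfolding gamma_OLD_def by (rule Min_le[OF finS]) (use v in blast)
  then show ?thesis using v fin by simp
qed

end
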